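(* There exists $\delta>0$ such that for all sufficiently large $|S|$ the following holds: for integers $(w_i)_{i\in S}$ indexed by a finite set $S$, if $|w(2^S)|\ge 2^{(1-\delta)|S|}$, then $\|b_S\|_2\le 2^{0.661|S|}$.
   Context: For $X\subseteq S$, $w(X)=\sum_{i\in X}w_i$, and $w(2^S)=\{w(X):X\subseteq S\}$. The function $b_S:\mathbb{Z}\to\mathbb{Z}$ is defined by $b_S(x)=|\{X\subseteq S: w(X)=x\}|$, and $\|b_S\|_2=\big(\sum_{x\in\mathbb{Z}}b_S(x)^2\big)^{1/2}$. *)

theory Defs
  imports "HOL-Analysis.Analysis"
begin

definition subset_sums :: "'a set \<Rightarrow> ('a \<Rightarrow> int) \<Rightarrow> int set" where
  "subset_sums S w = (\<lambda>X. \<Sum>i\<in>X. w i) ` Pow S"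

definition bcount :: "'a set \<Rightarrow> ('a \<Rightarrow> int) \<Rightarrow> int \<Rightarrow> nat" where
  "bcount S w x = card {X. X \<subseteq> S \<and> (\<Sum>i\<in>X. w i) = x}"

text \<open>The l2 norm of b_S; b_S vanishes outside subset_sums S w (a finite set for finite S).\<close>
definition bnorm2 :: "'a set \<Rightarrow> ('a \<Rightarrow> int) \<Rightarrow> real" where
  "bnorm2 S w = sqrt (\<Sum>x\<in>subset_sums S w. (real (bcount S w x))^2)"

end

theory Submission
  imports Defs
begin

lemma sum_Pow_card:
  fixes c :: real
  assumes "finite S"
  shows "(\<Sum>G\<in>Pow S. c ^ card G) = (1 + c) ^ card S"
  using assms
proof (induction S rule: finite_induct)
  case empty
  then show ?case by simp
next
  case (insert a F)
  have fin: "finite (Pow F)" using insert by simp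
  have disj: "Pow F \<inter> insert a ` Pow F = {}" using insert by auto
  have inj: "inj_on (insert a) (Pow F)"
  proof (rule inj_onI)
    fix x y assume "x \<in> Pow F" "y \<in> Pow F" "insert a x = insert a y"
    then have "insert a x - {a} = insert a y - {a}" "a \<notin> x" "a \<notin> y" using insert by auto
    then show "x = y" by simp
  qed
  have "(\<Sum>G\<in>Pow (insert a F). c ^ card G) = (\<Sum>G\<in>Pow F. c ^ card G) + (\<Sum>G\<in>insert a ` Pow F. c ^ card G)"
    unfolding Pow_insert using fin disj by (simp add: sum.union_disjoint)
  also have "(\<Sum>G\<in>insert a ` Pow F. c ^ card G) = (\<Sum>G\<in>Pow F. c ^ card (insert a G))"
    using inj by (simp add: sum.reindex)
  also have "\<dots> = (\<Sum>G\<in>Pow F. c * c ^ card G)"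
  proof (rule sum.cong)
    fix G assume "G \<in> Pow F"
    then have "finite G" "a \<notin> G" using insert finite_subset by auto
    then show "c ^ card (insert a G) = c * c ^ card G" by simp
  qed simp
  finally show ?case using insert by (simp add: sum_distrib_left[symmetric] algebra_simps)
qed

lemma sum_indicator:
  fixes w :: "nat \<Rightarrow> int"
  assumes "finite S" "X \<subseteq> S"
  shows "(\<Sum>i\<in>X. w i) = (\<Sum>i\<in>S. if i \<in> X then w i else 0)"
proof -
  have "S \<inter> X = X" using assms by auto
  then show ?thesis using sum.inter_restrict[OF assms(1), of w X] by simp
qed

definition Pairs :: "nat set \<Rightarrow> (nat \<Rightarrow> int) \<Rightarrow> (nat set \<times> nat set) set" where
  "Pairs S w = {(X,Y). X \<subseteq> S \<and> Y \<subseteq> S \<and> sum w X = sum w Y}"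

definition Qs :: "nat set \<Rightarrow> (nat \<Rightarrow> int) \<Rightarrow> (nat set \<times> nat set) set" where
  "Qs S w = {(A,B). A \<subseteq> S \<and> B \<subseteq> S \<and> A \<inter> B = {} \<and> sum w A = sum w B}"

lemma finite_Pairs: "finite S \<Longrightarrow> finite (Pairs S w)"
  by (rule finite_subset[of _ "Pow S \<times> Pow S"]) (auto simp: Pairs_def)

lemma finite_Qs: "finite S \<Longrightarrow> finite (Qs S w)"
  by (rule finite_subset[of _ "Pow S \<times> Pow S"]) (auto simp: Qs_def)

lemma finite_subset_sums: "finite S \<Longrightarrow> finite (subset_sums S w)"
  by (simp add: subset_sums_def)

lemma T_eq:
  assumes fin: "finite S"
  shows "(\<Sum>x\<in>subset_sums S w. (real (bcount S w x))^2) = real (card (Pairs S w))"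
proof -
  let ?P = "subset_sums S w"
  have img: "(\<lambda>p. sum w (fst p)) ` Pairs S w \<subseteq> ?P"
    by (auto simp: Pairs_def subset_sums_def)
  have "(\<Sum>x\<in>?P. card {p. p \<in> Pairs S w \<and> sum w (fst p) = x}) = card (Pairs S w)"
    using sum.group[OF finite_Pairs[OF fin] finite_subset_sums[OF fin] img, of "\<lambda>_. 1::nat"]
    by simp
  moreover have "\<And>x. {p. p \<in> Pairs S w \<and> sum w (fst p) = x} =
      {X. X \<subseteq> S \<and> sum w X = x} \<times> {X. X \<subseteq> S \<and> sum w X = x}"
    by (auto simp: Pairs_def)
  ultimately have "(\<Sum>x\<in>?P. (bcount S w x)^2) = card (Pairs S w)"
    by (simp add: bcount_def card_cartesian_product power2_eq_square)
  then show ?thesis by (metis (mono_tags, lifting) of_nat_power of_nat_sum sum.cong)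
qed

lemma fiber_bound:
  assumes fin: "finite S" and q: "(A,B) \<in> Qs S w"
  shows "card {p. p \<in> Pairs S w \<and> (fst p - snd p, snd p - fst p) = (A,B)} \<le> 2 ^ (card S - (card A + card B))"
proof -
  let ?F = "{p. p \<in> Pairs S w \<and> (fst p - snd p, snd p - fst p) = (A,B)}"
  have AB: "A \<subseteq> S" "B \<subseteq> S" "A \<inter> B = {}" using q by (auto simp: Qs_def)
  have inj: "inj_on (\<lambda>p. fst p \<inter> snd p) ?F"
  proof (rule inj_onI)
    fix p q assume "p \<in> ?F" "q \<in> ?F" "fst p \<inter> snd p = fst q \<inter> snd q"
    then show "p = q" by (cases p, cases q) auto
  qed
  have sub: "(\<lambda>p. fst p \<inter> snd p) ` ?F \<subseteq> Pow (S - (A \<union> B))"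
    by (auto simp: Pairs_def)
  have "card ?F \<le> card (Pow (S - (A \<union> B)))"
    using card_inj_on_le[OF inj sub] fin by simp
  also have "\<dots> = 2 ^ card (S - (A \<union> B))" using fin by (simp add: card_Pow)
  also have "card (S - (A \<union> B)) = card S - (card A + card B)"
  proof -
    have "finite A" "finite B" using AB fin by (auto intro: finite_subset)
    then have "card (A \<union> B) = card A + card B" using AB card_Un_disjoint by blast
    moreover have "A \<union> B \<subseteq> S" using AB by auto
    ultimately show ?thesis using card_Diff_subset[of "A \<union> B" S] \<open>finite A\<close> \<open>finite B\<close> by simp
  qed
  finally show ?thesis .
qed

lemma Pairs_le:
  assumes fin: "finite S"
  shows "card (Pairs S w) \<le> (\<Sum>q\<in>Qs S w. 2 ^ (card S - (card (fst q) + card (snd q))))"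
proof -
  let ?g = "\<lambda>p::nat set \<times> nat set. (fst p - snd p, snd p - fst p)"
  have img: "?g ` Pairs S w \<subseteq> Qs S w"
  proof
    fix q assume "q \<in> ?g ` Pairs S w"
    then obtain X Y where XY: "X \<subseteq> S" "Y \<subseteq> S" "sum w X = sum w Y" and q: "q = (X - Y, Y - X)"
      by (auto simp: Pairs_def)
    have fX: "finite X" "finite Y" using XY fin by (auto intro: finite_subset)
    have "sum w X = sum w (X \<inter> Y) + sum w (X - Y)" using fX by (simp add: sum.Int_Diff)
    moreover have "sum w Y = sum w (Y \<inter> X) + sum w (Y - X)" using fX by (simp add: sum.Int_Diff)
    ultimately have "sum w (X - Y) = sum w (Y - X)" using XY by (simp add: Int_commute)
    then show "q \<in> Qs S w" using q XY by (auto simp: Qs_def)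
  qed
  have "card (Pairs S w) = (\<Sum>q\<in>Qs S w. card {p. p \<in> Pairs S w \<and> ?g p = q})"
    using sum.group[OF finite_Pairs[OF fin] finite_Qs[OF fin] img, of "\<lambda>_. 1::nat"] by simp
  also have "\<dots> \<le> (\<Sum>q\<in>Qs S w. 2 ^ (card S - (card (fst q) + card (snd q))))"
    by (rule sum_mono) (use fiber_bound[OF fin] in fastforce)
  finally show ?thesis .
qed

definition code :: "(nat set \<times> nat set) \<times> nat set \<Rightarrow> nat set \<times> nat set" where
  "code p = (case p of ((A,B),Z) \<Rightarrow> ((A \<inter> Z) \<union> (B - Z), (Z - B) \<union> A))"

lemma code_val:
  assumes fin: "finite S" and q: "(A,B) \<in> Qs S w" and Z: "Z \<subseteq> S"
  shows "sum w Z = sum w (snd (code ((A,B),Z))) + sum w (fst (code ((A,B),Z)) \<inter> snd (code ((A,B),Z)))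
            - sum w (fst (code ((A,B),Z)) - snd (code ((A,B),Z)))"
proof -
  define G where "G = (A \<inter> Z) \<union> (B - Z)"
  define H where "H = (Z - B) \<union> A"
  have AB: "A \<subseteq> S" "B \<subseteq> S" "A \<inter> B = {}" "sum w A = sum w B" using q by (auto simp: Qs_def)
  have GH: "G \<subseteq> S" "H \<subseteq> S" using AB Z by (auto simp: G_def H_def)
  let ?i = "\<lambda>X i. if i \<in> X then w i else 0"
  have pw: "\<And>i. ?i H i + ?i (G \<inter> H) i - ?i (G - H) i = ?i Z i + ?i A i - ?i B i"
  proof -
    fix i show "?i H i + ?i (G \<inter> H) i - ?i (G - H) i = ?i Z i + ?i A i - ?i B i"
      using AB(3) by (cases "i \<in> A"; cases "i \<in> B"; cases "i \<in> Z") (auto simp: G_def H_def)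
  qed
  have s: "sum w H = (\<Sum>i\<in>S. ?i H i)" "sum w (G \<inter> H) = (\<Sum>i\<in>S. ?i (G \<inter> H) i)"
     "sum w (G - H) = (\<Sum>i\<in>S. ?i (G - H) i)" "sum w Z = (\<Sum>i\<in>S. ?i Z i)"
     "sum w A = (\<Sum>i\<in>S. ?i A i)" "sum w B = (\<Sum>i\<in>S. ?i B i)"
    using GH Z AB by (intro sum_indicator[OF fin]; blast)+
  have "sum w H + sum w (G \<inter> H) - sum w (G - H) = (\<Sum>i\<in>S. ?i H i + ?i (G \<inter> H) i - ?i (G - H) i)"
    unfolding s(1-3) by (simp only: sum.distrib sum_subtractf)
  also have "\<dots> = (\<Sum>i\<in>S. ?i Z i + ?i A i - ?i B i)" using pw by simp
  also have "\<dots> = sum w Z + sum w A - sum w B"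
    unfolding s(4-6) by (simp only: sum.distrib sum_subtractf)
  finally show ?thesis using AB(4) by (simp add: code_def G_def H_def)
qed

lemma code_inj:
  assumes fin: "finite S" and RS: "R \<subseteq> Pow S" and injR: "inj_on (sum w) R"
  shows "inj_on code (Qs S w \<times> R)"
proof (rule inj_onI)
  fix p p' assume p: "p \<in> Qs S w \<times> R" and p': "p' \<in> Qs S w \<times> R" and eq: "code p = code p'"
  obtain A B Z where pd: "p = ((A,B),Z)" by (metis prod.exhaust)
  obtain A' B' Z' where pd': "p' = ((A',B'),Z')" by (metis prod.exhaust)
  have q: "(A,B) \<in> Qs S w" "Z \<in> R" "(A',B') \<in> Qs S w" "Z' \<in> R" using p p' pd pd' by auto
  have Zs: "Z \<subseteq> S" "Z' \<subseteq> S" using q RS by auto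
  have cc: "code ((A,B),Z) = code ((A',B'),Z')" using eq pd pd' by simp
  have "sum w Z = sum w Z'"
    using code_val[OF fin q(1) Zs(1)] code_val[OF fin q(3) Zs(2)] unfolding cc by simp
  then have ZZ: "Z = Z'" using injR q(2) q(4) by (simp add: inj_on_def)
  have d1: "A \<inter> B = {}" "A' \<inter> B' = {}" using q by (auto simp: Qs_def)
  have e1: "(A \<inter> Z) \<union> (B - Z) = (A' \<inter> Z) \<union> (B' - Z)" "(Z - B) \<union> A = (Z - B') \<union> A'"
    using cc ZZ by (simp_all add: code_def)
  have "A = ((Z - B) \<union> A - Z) \<union> (((A \<inter> Z) \<union> (B - Z)) \<inter> Z)" using d1 by blast
  also have "\<dots> = ((Z - B') \<union> A' - Z) \<union> (((A' \<inter> Z) \<union> (B' - Z)) \<inter> Z)" using e1 by simp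
  also have "\<dots> = A'" using d1 by blast
  finally have AA: "A = A'" .
  have "B = (((A \<inter> Z) \<union> (B - Z)) - Z) \<union> (Z - ((Z - B) \<union> A))" using d1 by blast
  also have "\<dots> = (((A' \<inter> Z) \<union> (B' - Z)) - Z) \<union> (Z - ((Z - B') \<union> A'))" using e1 by simp
  also have "\<dots> = B'" using d1 by blast
  finally have BB: "B = B'" .
  show "p = p'" using pd pd' AA BB ZZ by simp
qed

lemma card_split:
  assumes fin: "finite S" and q: "(A,B) \<in> Qs S w"
  shows "card ((A \<inter> Z) \<union> (B - Z)) + card ((B \<inter> Z) \<union> (A - Z)) = card A + card B"
proof -
  have AB: "A \<subseteq> S" "B \<subseteq> S" "A \<inter> B = {}" using q by (auto simp: Qs_def)
  have f: "finite A" "finite B" using AB fin by (auto intro: finite_subset)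
  have "card ((A \<inter> Z) \<union> (B - Z)) = card (A \<inter> Z) + card (B - Z)"
    using f AB(3) by (intro card_Un_disjoint) auto
  moreover have "card ((B \<inter> Z) \<union> (A - Z)) = card (B \<inter> Z) + card (A - Z)"
    using f AB(3) by (intro card_Un_disjoint) auto
  moreover have "card A = card (A \<inter> Z) + card (A - Z)" using f card_Int_Diff by blast
  moreover have "card B = card (B \<inter> Z) + card (B - Z)" using f card_Int_Diff by blast
  ultimately show ?thesis by simp
qed

lemma main_sum:
  assumes fin: "finite S" and RS: "R \<subseteq> Pow S" and injR: "inj_on (sum w) R"
  shows "(\<Sum>p\<in>Qs S w \<times> R. (1/2::real)^(card (fst (fst p)) + card (snd (fst p)))) \<le> 2 * (5/2)^card S"
proof -
  define d where "d p = card (fst (fst p)) + card (snd (fst p))" for p :: "(nat set \<times> nat set) \<times> nat set"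
  define f where "f p = (1/2::real)^(d p)" for p
  define sw where "sw p = ((snd (fst p), fst (fst p)), snd p)" for p :: "(nat set \<times> nat set) \<times> nat set"
  let ?Q = "Qs S w \<times> R"
  define Good where "Good = {p \<in> ?Q. 2 * card (fst (code p)) \<le> d p}"
  have finR: "finite R" using RS fin by (meson finite_Pow_iff finite_subset)
  have finQ: "finite ?Q" using finite_Qs[OF fin] finR by simp
  have finG: "finite Good" using finQ by (simp add: Good_def)
  have swsw: "sw (sw p) = p" for p by (simp add: sw_def)
  have dsw: "d (sw p) = d p" for p by (simp add: d_def sw_def)
  have fsw: "f (sw p) = f p" for p by (simp add: f_def dsw)
  have cover: "?Q \<subseteq> Good \<union> sw ` Good"
  proof
    fix p assume p: "p \<in> ?Q"
    obtain A B Z where pd: "p = ((A,B),Z)" by (metis prod.exhaust)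
    have q: "(A,B) \<in> Qs S w" "Z \<in> R" using p pd by auto
    have qs: "(B,A) \<in> Qs S w" using q(1) by (auto simp: Qs_def)
    have cs: "card (fst (code p)) + card (fst (code (sw p))) = d p"
      using card_split[OF fin q(1), of Z] by (simp add: pd code_def sw_def d_def Int_commute Un_commute)
    show "p \<in> Good \<union> sw ` Good"
    proof (cases "2 * card (fst (code p)) \<le> d p")
      case True then show ?thesis using p by (simp add: Good_def)
    next
      case False
      then have "2 * card (fst (code (sw p))) \<le> d (sw p)" using cs dsw by simp
      moreover have "sw p \<in> ?Q" using qs q by (simp add: pd sw_def)
      ultimately have "sw p \<in> Good" by (simp add: Good_def)
      then have "sw (sw p) \<in> sw ` Good" by blast
      then show ?thesis by (simp add: swsw)
    qed
  qed
  have nn: "\<And>p. 0 \<le> f p" by (simp add: f_def)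
  have "(\<Sum>p\<in>?Q. f p) \<le> (\<Sum>p\<in>Good \<union> sw ` Good. f p)"
    by (rule sum_mono2) (use finG cover nn in auto)
  also have "\<dots> \<le> (\<Sum>p\<in>Good. f p) + (\<Sum>p\<in>sw ` Good. f p)"
  proof -
    have "(\<Sum>p\<in>Good \<union> sw ` Good. f p) + (\<Sum>p\<in>Good \<inter> sw ` Good. f p) = (\<Sum>p\<in>Good. f p) + (\<Sum>p\<in>sw ` Good. f p)"
      using finG by (intro sum.union_inter) auto
    moreover have "0 \<le> (\<Sum>p\<in>Good \<inter> sw ` Good. f p)" using nn by (simp add: sum_nonneg)
    ultimately show ?thesis by linarith
  qed
  also have "(\<Sum>p\<in>sw ` Good. f p) = (\<Sum>p\<in>Good. f p)"
  proof -
    have "inj_on sw Good" by (metis inj_onI swsw)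
    then show ?thesis by (simp add: sum.reindex fsw)
  qed
  also have "(\<Sum>p\<in>Good. f p) \<le> (\<Sum>p\<in>Good. (1/4::real) ^ card (fst (code p)))"
  proof (rule sum_mono)
    fix p assume "p \<in> Good"
    then have le: "2 * card (fst (code p)) \<le> d p" by (simp add: Good_def)
    have "f p \<le> (1/2::real) ^ (2 * card (fst (code p)))"
      unfolding f_def by (rule power_decreasing[OF le]) auto
    also have "\<dots> = (1/4) ^ card (fst (code p))" by (simp add: power_mult power2_eq_square)
    finally show "f p \<le> (1/4) ^ card (fst (code p))" .
  qed
  also have "(\<Sum>p\<in>Good. (1/4::real) ^ card (fst (code p))) = (\<Sum>c\<in>code ` Good. (1/4::real) ^ card (fst c))"
  proof -
    have "inj_on code Good" using inj_on_subset[OF code_inj[OF fin RS injR]] by (auto simp: Good_def)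
    then show ?thesis by (simp add: sum.reindex)
  qed
  also have "\<dots> \<le> (\<Sum>c\<in>Pow S \<times> Pow S. (1/4::real) ^ card (fst c))"
  proof (rule sum_mono2)
    show "finite (Pow S \<times> Pow S)" using fin by simp
    show "code ` Good \<subseteq> Pow S \<times> Pow S"
    proof
      fix c assume "c \<in> code ` Good"
      then obtain A B Z where "((A,B),Z) \<in> Good" "c = code ((A,B),Z)" by auto
      moreover have "A \<subseteq> S" "B \<subseteq> S" "Z \<subseteq> S" using calculation RS by (auto simp: Good_def Qs_def)
      ultimately show "c \<in> Pow S \<times> Pow S" by (auto simp: code_def)
    qed
  qed simp
  also have "(\<Sum>c\<in>Pow S \<times> Pow S. (1/4::real) ^ card (fst c)) = (\<Sum>G\<in>Pow S. \<Sum>H\<in>Pow S. (1/4::real) ^ card G)"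
    using sum.cartesian_product[of "\<lambda>G H. (1/4::real)^card G" "Pow S" "Pow S"]
    by (simp add: case_prod_beta)
  also have "\<dots> = 2 ^ card S * (5/4) ^ card S"
    using fin by (simp add: card_Pow sum_Pow_card[OF fin] sum_distrib_left[symmetric] mult.commute)
  finally have "(\<Sum>p\<in>?Q. f p) \<le> 2 * (2 ^ card S * (5/4::real) ^ card S)" by linarith
  also have "\<dots> = 2 * (5/2) ^ card S" by (simp add: power_mult_distrib[symmetric])
  finally show ?thesis by (simp add: f_def d_def)
qed

lemma Tm:
  assumes fin: "finite S"
  shows "real (card (Pairs S w)) * real (card (subset_sums S w)) \<le> 2 * 5 ^ card S"
proof -
  let ?P = "subset_sums S w"
  define rep where "rep s = (SOME X. X \<subseteq> S \<and> sum w X = s)" for s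
  have rep: "rep s \<subseteq> S \<and> sum w (rep s) = s" if "s \<in> ?P" for s
  proof -
    have "\<exists>X. X \<subseteq> S \<and> sum w X = s" using that by (auto simp: subset_sums_def)
    then show ?thesis unfolding rep_def by (rule someI_ex)
  qed
  define R where "R = rep ` ?P"
  have RS: "R \<subseteq> Pow S" using rep by (auto simp: R_def)
  have injR: "inj_on (sum w) R"
    by (rule inj_onI) (auto simp: R_def rep)
  have injrep: "inj_on rep ?P" by (rule inj_onI) (metis rep)
  have cardR: "card R = card ?P" using injrep by (simp add: R_def card_image)
  let ?d = "\<lambda>q::nat set \<times> nat set. card (fst q) + card (snd q)"
  have dle: "?d q \<le> card S" if "q \<in> Qs S w" for q
  proof -
    obtain A B where q: "q = (A,B)" by (metis prod.exhaust)
    have AB: "A \<subseteq> S" "B \<subseteq> S" "A \<inter> B = {}" using that q by (auto simp: Qs_def)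
    have f: "finite A" "finite B" using AB fin by (auto intro: finite_subset)
    have "card (A \<union> B) = card A + card B" using f AB card_Un_disjoint by blast
    moreover have "card (A \<union> B) \<le> card S" using AB fin by (intro card_mono) auto
    ultimately show ?thesis using q by simp
  qed
  have "real (card (Pairs S w)) \<le> real (\<Sum>q\<in>Qs S w. 2 ^ (card S - ?d q))"
    using Pairs_le[OF fin, of w] of_nat_le_iff by blast
  also have "\<dots> = (\<Sum>q\<in>Qs S w. 2 ^ card S * (1/2::real) ^ ?d q)"
  proof -
    have "real (2 ^ (card S - ?d q)) = 2 ^ card S * (1/2::real) ^ ?d q" if "q \<in> Qs S w" for q
    proof -
      have "(2::real) ^ card S = 2 ^ (card S - ?d q) * 2 ^ ?d q"
        using dle[OF that] by (simp add: power_add[symmetric])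
      then show ?thesis by (simp add: power_one_over field_simps)
    qed
    then show ?thesis by (simp add: of_nat_sum)
  qed
  finally have T1: "real (card (Pairs S w)) \<le> 2 ^ card S * (\<Sum>q\<in>Qs S w. (1/2::real) ^ ?d q)"
    by (simp add: sum_distrib_left)
  have "real (card (Pairs S w)) * real (card ?P) \<le> 2 ^ card S * ((\<Sum>q\<in>Qs S w. (1/2::real) ^ ?d q) * real (card R))"
    using mult_right_mono[OF T1, of "real (card R)"] cardR by (simp add: mult.assoc)
  also have "(\<Sum>q\<in>Qs S w. (1/2::real) ^ ?d q) * real (card R) = (\<Sum>q\<in>Qs S w. \<Sum>Z\<in>R. (1/2::real) ^ ?d q)"
    by (simp add: sum_distrib_left mult.commute)
  also have "\<dots> = (\<Sum>p\<in>Qs S w \<times> R. (1/2::real)^(card (fst (fst p)) + card (snd (fst p))))"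
    using sum.cartesian_product[of "\<lambda>q Z. (1/2::real) ^ ?d q" R "Qs S w"] by (simp add: case_prod_beta)
  finally have "real (card (Pairs S w)) * real (card ?P) \<le> 2 ^ card S * (\<Sum>p\<in>Qs S w \<times> R. (1/2::real)^(card (fst (fst p)) + card (snd (fst p))))"
    .
  also have "\<dots> \<le> 2 ^ card S * (2 * (5/2) ^ card S)"
    using main_sum[OF fin RS injR] by (intro mult_left_mono) auto
  also have "\<dots> = 2 * 5 ^ card S" by (simp add: power_mult_distrib[symmetric] field_simps)
  finally show ?thesis .
qed

lemma five_lt: "(5::real) < 2 powr (476/205)"
proof -
  have h: "(5::real)^205 < 2^476" by simp
  have "(2 powr (476/205::real))^205 = 2 powr ((476/205) * 205)"
    by (simp add: powr_realpow[symmetric] powr_powr)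
  also have "\<dots> = 2^476" by (simp add: powr_realpow[symmetric])
  finally have "(5::real)^205 < (2 powr (476/205))^205" using h by simp
  then show ?thesis by (rule power_less_imp_less_base) simp
qed

theorem proposition5:
  shows "\<exists>\<delta>::real. \<delta> > 0 \<and> (\<exists>N::nat. \<forall>(S::nat set) (w::nat \<Rightarrow> int).
            finite S \<and> card S \<ge> N \<and>
            real (card (subset_sums S w)) \<ge> 2 powr ((1 - \<delta>) * real (card S))
            \<longrightarrow> bnorm2 S w \<le> 2 powr (0.661 * real (card S)))"
proof -
  define q where "q = (2::real) powr (476/205)"
  define e where "e = q / 5 - 1"
  have e0: "e > 0" using five_lt by (simp add: e_def q_def)
  define N where "N = nat (ceiling (1/e))"
  have key: "2 * 5 ^ n \<le> q ^ n" if "n \<ge> N" for n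
  proof -
    have "1/e \<le> real n" using that by (simp add: N_def)
    then have "1 \<le> real n * e" using e0 by (simp add: field_simps)
    moreover have "1 + real n * e \<le> (1 + e) ^ n" using e0 by (intro Bernoulli_inequality) simp
    ultimately have "2 \<le> (q/5) ^ n" by (simp add: e_def)
    then have "2 * 5^n \<le> (q/5)^n * 5^n" by (simp add: mult_right_mono)
    also have "\<dots> = q^n" by (simp add: power_divide)
    finally show ?thesis .
  qed
  show ?thesis
  proof (intro exI[of _ "1/20500"] conjI allI impI exI[of _ N])
    show "(0::real) < 1/20500" by simp
    fix S :: "nat set" and w :: "nat \<Rightarrow> int"
    assume a: "finite S \<and> N \<le> card S \<and> 2 powr ((1 - 1/20500) * real (card S)) \<le> real (card (subset_sums S w))"
    let ?n = "card S"
    let ?m = "real (card (subset_sums S w))"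
    let ?T = "(\<Sum>x\<in>subset_sums S w. (real (bcount S w x))^2)"
    have fin: "finite S" using a by simp
    have mpos: "0 < ?m" using a powr_gt_zero[of 2 "(1 - 1/20500) * real (card S)"] by linarith
    have Tm: "?T * ?m \<le> 2 * 5 ^ ?n" using Tm[OF fin, of w] T_eq[OF fin, of w] by simp
    have qn: "q ^ ?n = 2 powr (1.322 * real ?n) * 2 powr ((1 - 1/20500) * real ?n)"
    proof -
      have "q ^ ?n = q powr real ?n" by (simp add: q_def powr_realpow)
      also have "\<dots> = 2 powr (476/205 * real ?n)" by (simp add: q_def powr_powr)
      also have "\<dots> = 2 powr (1.322 * real ?n + (1 - 1/20500) * real ?n)" by (simp add: algebra_simps)
      finally show ?thesis by (simp only: powr_add)
    qed
    have "?T * ?m \<le> 2 powr (1.322 * real ?n) * ?m"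
    proof -
      have "?T * ?m \<le> q ^ ?n" using Tm key a by (meson order_trans)
      also have "\<dots> \<le> 2 powr (1.322 * real ?n) * ?m" unfolding qn using a by (intro mult_left_mono) auto
      finally show ?thesis .
    qed
    then have T: "?T \<le> 2 powr (1.322 * real ?n)" using mpos by simp
    have "(2 powr (0.661 * real ?n))^2 = 2 powr (1.322 * real ?n)"
      by (simp add: powr_realpow[symmetric] powr_powr)
    then have "?T \<le> (2 powr (0.661 * real ?n))^2" using T by simp
    then have "sqrt ?T \<le> sqrt ((2 powr (0.661 * real ?n))^2)" by (rule real_sqrt_le_mono)
    then show "bnorm2 S w \<le> 2 powr (0.661 * real ?n)" by (simp add: bnorm2_def)
  qed
qed

end
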